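(* Let $\mathbb{K}$ be a field, $\theta=(\{X_t\}_{t\in G},\{h_t\}_{t\in G})$ a free partial action of a group $G$ on a set $X$, and $\alpha=(\{\mathcal{F}_0(X_t)\}_{t\in G},\{\alpha_t\}_{t\in G})$ the associated partial action on $\mathcal{F}_0(X)$, $\alpha_t(f)=f\circ h_{t^{-1}}$. Let $R=\{(x,h_t(x)): t\in G,\ x\in X_{t^{-1}}\}$ and let $\mathcal{F}_0(R)$ be the space of finitely supported functions $R\to\mathbb{K}$ with pointwise linear operations and product $$(f*g)(x,h_t(x))=\sum_{s\in G,\ x\in X_{s^{-1}}} f(x,h_s(x))\,g(h_s(x),h_t(x)).$$ Then the algebras $\mathcal{F}_0(R)$ and $\mathcal{F}_0(X)\rtimes_\alpha G$ are isomorphic.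
   Context: $\mathcal{F}_0(X)$ is the $\mathbb{K}$-algebra of finitely supported functions $X\to\mathbb{K}$ with pointwise operations; $\mathcal{F}_0(X_t)=\{f\in\mathcal{F}_0(X): f=0 \text{ off } X_t\}$. A partial action of $G$ on a set $X$: subsets $X_t$, bijections $h_t:X_{t^{-1}}\to X_t$, $X_e=X$, $h_e=\mathrm{id}$, $h_t(X_{t^{-1}}\cap X_s)=X_t\cap X_{ts}$, $h_th_s=h_{ts}$ on $X_{s^{-1}}\cap X_{s^{-1}t^{-1}}$; free means $h_t(x)=x$ implies $t=e$. The partial skew group ring $\mathcal{F}_0(X)\rtimes_\alpha G$ is the set of finite formal sums $\sum_t a_t\delta_t$ with $a_t\in\mathcal{F}_0(X_t)$, usual addition, and multiplication determined by $(a_t\delta_t)(b_s\delta_s)=\alpha_t(\alpha_{t^{-1}}(a_t)b_s)\delta_{ts}$. *)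

theory Defs
  imports "HOL-Algebra.Group"
begin

definition partial_action ::
  "('g, 'm) monoid_scheme \<Rightarrow> 'x set \<Rightarrow> ('g \<Rightarrow> 'x set) \<Rightarrow> ('g \<Rightarrow> 'x \<Rightarrow> 'x) \<Rightarrow> bool" where
  "partial_action G X Xs h \<longleftrightarrow>
     (\<forall>t\<in>carrier G. Xs t \<subseteq> X) \<and>
     Xs \<one>\<^bsub>G\<^esub> = X \<and> (\<forall>x\<in>X. h \<one>\<^bsub>G\<^esub> x = x) \<and>
     (\<forall>t\<in>carrier G. bij_betw (h t) (Xs (inv\<^bsub>G\<^esub> t)) (Xs t)) \<and>
     (\<forall>t\<in>carrier G. \<forall>s\<in>carrier G.
        h t ` (Xs (inv\<^bsub>G\<^esub> t) \<inter> Xs s) = Xs t \<inter> Xs (t \<otimes>\<^bsub>G\<^esub> s)) \<and>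
     (\<forall>t\<in>carrier G. \<forall>s\<in>carrier G.
        \<forall>x\<in>Xs (inv\<^bsub>G\<^esub> s) \<inter> Xs (inv\<^bsub>G\<^esub> s \<otimes>\<^bsub>G\<^esub> inv\<^bsub>G\<^esub> t).
          h t (h s x) = h (t \<otimes>\<^bsub>G\<^esub> s) x)"

definition free_partial_action ::
  "('g, 'm) monoid_scheme \<Rightarrow> 'x set \<Rightarrow> ('g \<Rightarrow> 'x set) \<Rightarrow> ('g \<Rightarrow> 'x \<Rightarrow> 'x) \<Rightarrow> bool" where
  "free_partial_action G X Xs h \<longleftrightarrow> partial_action G X Xs h \<and>
     (\<forall>t\<in>carrier G. \<forall>x\<in>Xs (inv\<^bsub>G\<^esub> t). h t x = x \<longrightarrow> t = \<one>\<^bsub>G\<^esub>)"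

definition alpha ::
  "('g, 'm) monoid_scheme \<Rightarrow> ('g \<Rightarrow> 'x set) \<Rightarrow> ('g \<Rightarrow> 'x \<Rightarrow> 'x) \<Rightarrow> 'g \<Rightarrow> ('x \<Rightarrow> 'k::field) \<Rightarrow> 'x \<Rightarrow> 'k" where
  "alpha G Xs h t f = (\<lambda>x. if x \<in> Xs t then f (h (inv\<^bsub>G\<^esub> t) x) else 0)"

text \<open>Partial skew group ring F_0(X) \<rtimes>_alpha G: a finite formal sum \<Sum> a_t delta_t
  is represented by the function t \<mapsto> a_t, with a_t \<in> F_0(X_t) and only finitely many
  (t,x) with a t x \<noteq> 0.\<close>
definition skew_carrier ::
  "('g, 'm) monoid_scheme \<Rightarrow> ('g \<Rightarrow> 'x set) \<Rightarrow> ('g \<Rightarrow> 'x \<Rightarrow> 'k::field) set" where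
  "skew_carrier G Xs = {a. finite {(t, x). a t x \<noteq> 0} \<and>
     (\<forall>t x. a t x \<noteq> 0 \<longrightarrow> t \<in> carrier G \<and> x \<in> Xs t)}"

definition skew_supp :: "('g, 'm) monoid_scheme \<Rightarrow> ('g \<Rightarrow> 'x \<Rightarrow> 'k::field) \<Rightarrow> 'g set" where
  "skew_supp G a = {t \<in> carrier G. a t \<noteq> (\<lambda>x. 0)}"

text \<open>Product extending (a_t delta_t)(b_s delta_s) = alpha_t(alpha_(t^-1)(a_t) b_s) delta_(ts) bilinearly.\<close>
definition skew_mult ::
  "('g, 'm) monoid_scheme \<Rightarrow> ('g \<Rightarrow> 'x set) \<Rightarrow> ('g \<Rightarrow> 'x \<Rightarrow> 'x) \<Rightarrow>
   ('g \<Rightarrow> 'x \<Rightarrow> 'k::field) \<Rightarrow> ('g \<Rightarrow> 'x \<Rightarrow> 'k) \<Rightarrow> ('g \<Rightarrow> 'x \<Rightarrow> 'k)" where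
  "skew_mult G Xs h a b = (\<lambda>r x.
     \<Sum>t\<in>skew_supp G a. \<Sum>s\<in>skew_supp G b.
       if t \<otimes>\<^bsub>G\<^esub> s = r
       then alpha G Xs h t (\<lambda>y. alpha G Xs h (inv\<^bsub>G\<^esub> t) (a t) y * b s y) x
       else 0)"

definition orbit_rel ::
  "('g, 'm) monoid_scheme \<Rightarrow> ('g \<Rightarrow> 'x set) \<Rightarrow> ('g \<Rightarrow> 'x \<Rightarrow> 'x) \<Rightarrow> ('x \<times> 'x) set" where
  "orbit_rel G Xs h = {(x, h t x) | t x. t \<in> carrier G \<and> x \<in> Xs (inv\<^bsub>G\<^esub> t)}"

definition F0R ::
  "('g, 'm) monoid_scheme \<Rightarrow> ('g \<Rightarrow> 'x set) \<Rightarrow> ('g \<Rightarrow> 'x \<Rightarrow> 'x) \<Rightarrow> ('x \<times> 'x \<Rightarrow> 'k::field) set" where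
  "F0R G Xs h = {f. finite {p. f p \<noteq> 0} \<and> (\<forall>p. f p \<noteq> 0 \<longrightarrow> p \<in> orbit_rel G Xs h)}"

text \<open>(f*g)(x, h_t x) = \<Sum>_{s \<in> G, x \<in> X_(s^-1)} f(x, h_s x) g(h_s x, h_t x);
  the sum is written over the (finitely many) s for which the summand may be nonzero.\<close>
definition R_mult ::
  "('g, 'm) monoid_scheme \<Rightarrow> ('g \<Rightarrow> 'x set) \<Rightarrow> ('g \<Rightarrow> 'x \<Rightarrow> 'x) \<Rightarrow>
   ('x \<times> 'x \<Rightarrow> 'k::field) \<Rightarrow> ('x \<times> 'x \<Rightarrow> 'k) \<Rightarrow> ('x \<times> 'x \<Rightarrow> 'k)" where
  "R_mult G Xs h f g = (\<lambda>(x, z).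
     if (x, z) \<in> orbit_rel G Xs h
     then (\<Sum>s\<in>{s\<in>carrier G. x \<in> Xs (inv\<^bsub>G\<^esub> s) \<and> f (x, h s x) \<noteq> 0}.
             f (x, h s x) * g (h s x, z))
     else 0)"

end

theory Submission
  imports Defs
begin

locale fpa = group G for G :: "('g, 'm) monoid_scheme" (structure) +
  fixes X :: "'x set" and Xs :: "'g \<Rightarrow> 'x set" and h :: "'g \<Rightarrow> 'x \<Rightarrow> 'x"
  assumes fr: "free_partial_action G X Xs h"
begin

lemma pa: "partial_action G X Xs h"
  using fr unfolding free_partial_action_def by (rule conjunct1)
lemmas pa' = pa[unfolded partial_action_def]

lemma sub: "t \<in> carrier G \<Longrightarrow> Xs t \<subseteq> X"
  using pa'[THEN conjunct1] by blast
lemma one: "Xs \<one> = X"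
  using pa'[THEN conjunct2, THEN conjunct1] .
lemma h1: "x \<in> X \<Longrightarrow> h \<one> x = x"
  using pa'[THEN conjunct2, THEN conjunct2, THEN conjunct1] by blast
lemma hbij: "t \<in> carrier G \<Longrightarrow> bij_betw (h t) (Xs (inv t)) (Xs t)"
  using pa'[THEN conjunct2, THEN conjunct2, THEN conjunct2, THEN conjunct1] by blast
lemma img: "t \<in> carrier G \<Longrightarrow> s \<in> carrier G \<Longrightarrow>
   h t ` (Xs (inv t) \<inter> Xs s) = Xs t \<inter> Xs (t \<otimes> s)"
  using pa'[THEN conjunct2, THEN conjunct2, THEN conjunct2, THEN conjunct2, THEN conjunct1] by blast
lemma comp: "t \<in> carrier G \<Longrightarrow> s \<in> carrier G \<Longrightarrow> x \<in> Xs (inv s) \<Longrightarrow>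
   x \<in> Xs (inv s \<otimes> inv t) \<Longrightarrow> h t (h s x) = h (t \<otimes> s) x"
  using pa'[THEN conjunct2, THEN conjunct2, THEN conjunct2, THEN conjunct2, THEN conjunct2] by blast
lemma free: "t \<in> carrier G \<Longrightarrow> x \<in> Xs (inv t) \<Longrightarrow> h t x = x \<Longrightarrow> t = \<one>"
  using fr unfolding free_partial_action_def by blast

lemma hmem: "s \<in> carrier G \<Longrightarrow> x \<in> Xs (inv s) \<Longrightarrow> h s x \<in> Xs s"
  using hbij bij_betw_apply by metis

lemma hinv: "s \<in> carrier G \<Longrightarrow> x \<in> Xs (inv s) \<Longrightarrow> h (inv s) (h s x) = x"
proof -
  assume s: "s \<in> carrier G" and x: "x \<in> Xs (inv s)"
  have "x \<in> Xs (inv s \<otimes> inv (inv s))" using s x sub[of "inv s"] by (auto simp: one)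
  hence "h (inv s) (h s x) = h (inv s \<otimes> s) x" using comp[of "inv s" s x] s x by simp
  also have "\<dots> = x" using s x sub[of "inv s"] by (auto simp: h1)
  finally show ?thesis .
qed

lemma hinv': "t \<in> carrier G \<Longrightarrow> x \<in> Xs t \<Longrightarrow> h t (h (inv t) x) = x"
  using hinv[of "inv t" x] by simp

lemma hmem': "t \<in> carrier G \<Longrightarrow> x \<in> Xs t \<Longrightarrow> h (inv t) x \<in> Xs (inv t)"
  using hmem[of "inv t" x] by simp

lemma inter: "s \<in> carrier G \<Longrightarrow> r \<in> carrier G \<Longrightarrow> x \<in> Xs (inv s) \<Longrightarrow> x \<in> Xs r \<Longrightarrow>
   h s x \<in> Xs (s \<otimes> r)"
  using img[of s r] by blast

lemma key: "s1 \<in> carrier G \<Longrightarrow> s2 \<in> carrier G \<Longrightarrow> x \<in> Xs (inv s1) \<Longrightarrow> x \<in> Xs (inv s2) \<Longrightarrow>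
   h s1 x = h s2 x \<Longrightarrow> s1 = s2"
proof -
  assume s1: "s1 \<in> carrier G" and s2: "s2 \<in> carrier G" and x1: "x \<in> Xs (inv s1)"
    and x2: "x \<in> Xs (inv s2)" and eq: "h s1 x = h s2 x"
  have y1: "h s1 x \<in> Xs s1" using hmem s1 x1 by blast
  have y2: "h s1 x \<in> Xs s2" using hmem[OF s2 x2] eq by simp
  have i1: "inv (inv s1) = s1" using s1 by simp
  have "h s1 x \<in> Xs (inv (inv s1)) \<inter> Xs s2" using y1 y2 i1 by simp
  hence "h (inv s1) (h s1 x) \<in> h (inv s1) ` (Xs (inv (inv s1)) \<inter> Xs s2)" by (rule imageI)
  hence "x \<in> Xs (inv s1) \<inter> Xs (inv s1 \<otimes> s2)"
    using img[of "inv s1" s2] s1 s2 hinv[OF s1 x1] by simp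
  hence xx: "x \<in> Xs (inv s1 \<otimes> s2)" by blast
  have i2: "inv (inv s2) = s2" using s2 by simp
  have "h (inv s2) (h s1 x) = h (inv s2 \<otimes> s1) x"
    using comp[of "inv s2" s1 x] s1 s2 x1 xx i2 by simp
  moreover have "h (inv s2) (h s1 x) = x" using eq hinv[OF s2 x2] by simp
  moreover have "inv (inv s2 \<otimes> s1) = inv s1 \<otimes> s2"
    using inv_mult_group[of "inv s2" s1] s1 s2 i2 by simp
  hence "x \<in> Xs (inv (inv s2 \<otimes> s1))" using xx by simp
  ultimately have "inv s2 \<otimes> s1 = \<one>" using free[of "inv s2 \<otimes> s1" x] s1 s2 by simp
  hence "s1 = s2 \<otimes> \<one>" using inv_solve_left'[of "\<one>" s2 s1] s1 s2 by simp
  thus ?thesis using s2 by simp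
qed

lemma comp2: "s \<in> carrier G \<Longrightarrow> r \<in> carrier G \<Longrightarrow> x \<in> Xs (inv s) \<Longrightarrow> x \<in> Xs r \<Longrightarrow>
   h (inv r \<otimes> inv s) (h s x) = h (inv r) x"
proof -
  assume s: "s \<in> carrier G" and r: "r \<in> carrier G" and x: "x \<in> Xs (inv s)" "x \<in> Xs r"
  have e1: "inv (inv r \<otimes> inv s) = s \<otimes> r" using inv_mult_group[of "inv r" "inv s"] s r by simp
  have "inv s \<otimes> (s \<otimes> r) = (inv s \<otimes> s) \<otimes> r" using s r by (simp only: m_assoc inv_closed)
  also have "\<dots> = r" using s r by simp
  finally have e2: "inv s \<otimes> inv (inv r \<otimes> inv s) = r" using e1 by simp
  have "h (inv r \<otimes> inv s) (h s x) = h ((inv r \<otimes> inv s) \<otimes> s) x"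
    using comp[of "inv r \<otimes> inv s" s x] s r x e2 by simp
  also have "(inv r \<otimes> inv s) \<otimes> s = inv r" using s r by (simp add: m_assoc)
  finally show ?thesis .
qed

definition Phi :: "('x \<times> 'x \<Rightarrow> 'k::field) \<Rightarrow> 'g \<Rightarrow> 'x \<Rightarrow> 'k" where
  "Phi f = (\<lambda>t x. if t \<in> carrier G \<and> x \<in> Xs t then f (x, h (inv t) x) else 0)"

lemma Phi_into: assumes f: "f \<in> F0R G Xs h" shows "Phi f \<in> skew_carrier G Xs"
proof -
  let ?D = "{(t, x). Phi f t x \<noteq> 0}"
  let ?m = "\<lambda>(t::'g, x::'x). (x, h (inv t) x)"
  have inj: "inj_on ?m ?D"
  proof (rule inj_onI)
    fix p q assume pD: "p \<in> ?D" and qD: "q \<in> ?D" and pq: "?m p = ?m q"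
    obtain t1 x1 where p: "p = (t1, x1)" by (cases p)
    obtain t2 x2 where q: "q = (t2, x2)" by (cases q)
    have a: "Phi f t1 x1 \<noteq> 0" "Phi f t2 x2 \<noteq> 0" using pD qD p q by auto
    have e: "x1 = x2" "h (inv t1) x1 = h (inv t2) x2" using pq p q by auto
    have "t1 \<in> carrier G" "x1 \<in> Xs t1" "t2 \<in> carrier G" "x2 \<in> Xs t2"
      using a by (auto simp: Phi_def split: if_splits)
    hence "inv t1 = inv t2" using key[of "inv t1" "inv t2" x1] e by simp
    hence "t1 = t2" using \<open>t1 \<in> carrier G\<close> \<open>t2 \<in> carrier G\<close> by (metis inv_inv)
    thus "p = q" using p q e by simp
  qed
  have "?m ` ?D \<subseteq> {p. f p \<noteq> 0}"
    by (auto simp: Phi_def split: if_splits)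
  moreover have "finite {p. f p \<noteq> 0}" using f by (simp add: F0R_def)
  ultimately have "finite (?m ` ?D)" by (rule finite_subset)
  hence "finite ?D" using inj finite_imageD by blast
  thus ?thesis by (auto simp: skew_carrier_def Phi_def split: if_splits)
qed

lemma Phi_inj: "inj_on Phi (F0R G Xs h)"
proof (rule inj_onI)
  fix f g :: "'x \<times> 'x \<Rightarrow> 'k::field" assume f: "f \<in> F0R G Xs h" and g: "g \<in> F0R G Xs h"
    and e: "Phi f = Phi g"
  show "f = g"
  proof
    fix p show "f p = g p"
    proof (cases "p \<in> orbit_rel G Xs h")
      case True
      then obtain t x where p: "p = (x, h t x)" "t \<in> carrier G" "x \<in> Xs (inv t)"
        by (auto simp: orbit_rel_def)
      have "Phi f (inv t) x = Phi g (inv t) x" using e by simp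
      thus ?thesis using p by (simp add: Phi_def)
    next
      case False
      have "f p = 0" using f False unfolding F0R_def by blast
      moreover have "g p = 0" using g False unfolding F0R_def by blast
      ultimately show ?thesis by simp
    qed
  qed
qed

lemma Phi_surj: assumes a: "a \<in> skew_carrier G Xs" shows "a \<in> Phi ` F0R G Xs h"
proof -
  have a0: "\<And>t x. a t x \<noteq> 0 \<Longrightarrow> t \<in> carrier G \<and> x \<in> Xs t"
    and afin: "finite {(t, x). a t x \<noteq> 0}" using a by (auto simp: skew_carrier_def)
  define P where "P = (\<lambda>x z t. a t x \<noteq> 0 \<and> z = h (inv t) x)"
  define f where "f = (\<lambda>(x, z). if \<exists>t. P x z t then a (SOME t. P x z t) x else 0)"
  have uniq: "\<And>x z t t'. P x z t \<Longrightarrow> P x z t' \<Longrightarrow> t = t'"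
  proof -
    fix x z t t' assume "P x z t" "P x z t'"
    hence "t \<in> carrier G" "x \<in> Xs t" "t' \<in> carrier G" "x \<in> Xs t'" "h (inv t) x = h (inv t') x"
      using a0 by (auto simp: P_def)
    hence "inv t = inv t'" using key[of "inv t" "inv t'" x] by simp
    thus "t = t'" using \<open>t \<in> carrier G\<close> \<open>t' \<in> carrier G\<close> by (metis inv_inv)
  qed
  have sup: "{p. f p \<noteq> 0} \<subseteq> (\<lambda>(t, x). (x, h (inv t) x)) ` {(t, x). a t x \<noteq> 0}"
  proof
    fix p assume "p \<in> {p. f p \<noteq> 0}"
    then obtain x z where p: "p = (x, z)" and ex: "\<exists>t. P x z t"
      by (cases p) (auto simp: f_def split: if_splits)
    hence "P x z (SOME t. P x z t)" by (metis someI_ex)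
    thus "p \<in> (\<lambda>(t, x). (x, h (inv t) x)) ` {(t, x). a t x \<noteq> 0}"
      using p by (auto simp: P_def image_iff)
  qed
  have fF: "f \<in> F0R G Xs h"
    unfolding F0R_def
  proof (intro CollectI conjI allI impI)
    show "finite {p. f p \<noteq> 0}" using sup afin finite_subset by blast
    fix p assume "f p \<noteq> 0"
    then obtain t x where "p = (x, h (inv t) x)" "a t x \<noteq> 0" using sup by force
    thus "p \<in> orbit_rel G Xs h" using a0[of t x] unfolding orbit_rel_def
      by (intro CollectI exI[of _ "inv t"] exI[of _ x]) simp
  qed
  have "Phi f = a"
  proof (intro ext)
    fix t x
    show "Phi f t x = a t x"
    proof (cases "t \<in> carrier G \<and> x \<in> Xs t")
      case False thus ?thesis using a0[of t x] by (auto simp: Phi_def)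
    next
      case True
      show ?thesis
      proof (cases "a t x = 0")
        case False
        hence Pt: "P x (h (inv t) x) t" by (simp add: P_def)
        hence "(SOME t'. P x (h (inv t) x) t') = t" using uniq by (metis someI_ex)
        thus ?thesis using True Pt by (auto simp: Phi_def f_def)
      next
        case z: True
        have "\<not> (\<exists>t'. P x (h (inv t) x) t')"
        proof
          assume "\<exists>t'. P x (h (inv t) x) t'"
          then obtain t' where Pt': "P x (h (inv t) x) t'" by blast
          hence "t' \<in> carrier G" "x \<in> Xs t'" using a0 by (auto simp: P_def)
          hence "inv t' = inv t" using key[of "inv t'" "inv t" x] True Pt' by (simp add: P_def)
          hence "t' = t" using True \<open>t' \<in> carrier G\<close> by (metis inv_inv)
          thus False using Pt' z by (simp add: P_def)
        qed
        thus ?thesis using True z unfolding Phi_def f_def by auto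
      qed
    qed
  qed
  thus ?thesis using fF by blast
qed

lemma Phi_bij: "bij_betw Phi (F0R G Xs h) (skew_carrier G Xs)"
  unfolding bij_betw_def using Phi_inj Phi_into Phi_surj by blast


lemma alpha_simp: "t \<in> carrier G \<Longrightarrow>
  alpha G Xs h t (\<lambda>y. alpha G Xs h (inv t) c y * d y) x = (if x \<in> Xs t then c x * d (h (inv t) x) else 0)"
  using hmem'[of t x] hinv'[of t x] by (simp add: alpha_def)

lemma supp_fin: assumes "a \<in> skew_carrier G Xs" shows "finite (skew_supp G a)"
proof -
  have "skew_supp G a \<subseteq> fst ` {(t, x). a t x \<noteq> 0}"
    by (force simp: skew_supp_def image_iff)
  thus ?thesis using assms finite_subset by (auto simp: skew_carrier_def)
qed

lemma Phi_mult: assumes f: "f \<in> F0R G Xs h" and g: "g \<in> F0R G Xs h"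
  shows "Phi (R_mult G Xs h f g) = skew_mult G Xs h (Phi f) (Phi g)"
proof (intro ext)
  fix r x
  define a where "a = Phi f"
  define b where "b = Phi g"
  define A where "A = skew_supp G a"
  define B where "B = skew_supp G b"
  define E where "E = (\<lambda>t s. if x \<in> Xs t then a t x * b s (h (inv t) x) else 0)"
  have Afin: "finite A" unfolding A_def a_def using Phi_into[OF f] supp_fin by blast
  have Bfin: "finite B" unfolding B_def b_def using Phi_into[OF g] supp_fin by blast
  have AG: "A \<subseteq> carrier G" and BG: "B \<subseteq> carrier G" by (auto simp: A_def B_def skew_supp_def)
  have RHS: "skew_mult G Xs h (Phi f) (Phi g) r x = (\<Sum>t\<in>A. \<Sum>s\<in>B. if t \<otimes> s = r then E t s else 0)"
    unfolding skew_mult_def a_def[symmetric] b_def[symmetric] A_def[symmetric] B_def[symmetric]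
    using AG by (intro sum.cong refl) (auto simp: alpha_simp E_def)
  show "Phi (R_mult G Xs h f g) r x = skew_mult G Xs h (Phi f) (Phi g) r x"
  proof (cases "r \<in> carrier G \<and> x \<in> Xs r")
    case False
    have "E t s = 0" if t: "t \<in> A" and s: "s \<in> B" and ts: "t \<otimes> s = r" for t s
    proof (rule ccontr)
      assume ne: "E t s \<noteq> 0"
      have tG: "t \<in> carrier G" and sG: "s \<in> carrier G" using t s AG BG by auto
      have xt: "x \<in> Xs t" and bne: "b s (h (inv t) x) \<noteq> 0" using ne by (auto simp: E_def split: if_splits)
      have ys: "h (inv t) x \<in> Xs s" using bne by (auto simp: b_def Phi_def split: if_splits)
      have yt: "h (inv t) x \<in> Xs (inv t)" using hmem' tG xt by blast
      have "h t (h (inv t) x) \<in> Xs t \<inter> Xs (t \<otimes> s)" using img[OF tG sG] ys yt by blast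
      hence "x \<in> Xs r" using hinv'[OF tG xt] ts by simp
      moreover have "r \<in> carrier G" using ts tG sG by blast
      ultimately show False using False by blast
    qed
    hence "skew_mult G Xs h (Phi f) (Phi g) r x = 0" unfolding RHS
      by (intro sum.neutral ballI) auto
    moreover have "Phi (R_mult G Xs h f g) r x = 0" using False unfolding Phi_def by auto
    ultimately show ?thesis by simp
  next
    case True
    hence rG: "r \<in> carrier G" and xr: "x \<in> Xs r" by simp_all
    define S where "S = {s \<in> carrier G. x \<in> Xs (inv s) \<and> f (x, h s x) \<noteq> 0}"
    have inR: "(x, h (inv r) x) \<in> orbit_rel G Xs h" unfolding orbit_rel_def
      using rG xr by (intro CollectI exI[of _ "inv r"] exI[of _ x]) simp
    have LHS: "Phi (R_mult G Xs h f g) r x = (\<Sum>s\<in>S. f (x, h s x) * g (h s x, h (inv r) x))"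
      using True inR by (simp add: Phi_def R_mult_def S_def)
    have step1: "(\<Sum>s\<in>B. if t \<otimes> s = r then E t s else 0) = E t (inv t \<otimes> r)" if t: "t \<in> A" for t
    proof -
      have tG: "t \<in> carrier G" using t AG by auto
      have "(\<Sum>s\<in>B. if t \<otimes> s = r then E t s else 0) = (\<Sum>s\<in>B. if s = inv t \<otimes> r then E t s else 0)"
      proof (rule sum.cong[OF refl])
        fix s assume "s \<in> B"
        hence "s \<in> carrier G" using BG by blast
        hence "(t \<otimes> s = r) = (s = inv t \<otimes> r)" using tG rG by (metis inv_solve_left)
        thus "(if t \<otimes> s = r then E t s else 0) = (if s = inv t \<otimes> r then E t s else 0)" by simp
      qed
      also have "\<dots> = (if inv t \<otimes> r \<in> B then E t (inv t \<otimes> r) else 0)"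
        using Bfin by (simp add: sum.delta')
      also have "\<dots> = E t (inv t \<otimes> r)"
      proof -
        have "inv t \<otimes> r \<notin> B \<Longrightarrow> b (inv t \<otimes> r) = (\<lambda>x. 0)" using tG rG by (auto simp: B_def skew_supp_def)
        thus ?thesis by (auto simp: E_def)
      qed
      finally show ?thesis .
    qed
    have sub1: "m_inv G ` S \<subseteq> A"
    proof
      fix t assume "t \<in> m_inv G ` S"
      then obtain s where s: "s \<in> S" "t = inv s" by blast
      hence "a t x \<noteq> 0" by (auto simp: S_def a_def Phi_def)
      thus "t \<in> A" using s by (auto simp: A_def skew_supp_def S_def)
    qed
    have zero: "E t (inv t \<otimes> r) = 0" if t: "t \<in> A - m_inv G ` S" for t
    proof (rule ccontr)
      assume ne: "E t (inv t \<otimes> r) \<noteq> 0"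
      have tG: "t \<in> carrier G" using t AG by auto
      have xt: "x \<in> Xs t" and ane: "a t x \<noteq> 0" using ne by (auto simp: E_def split: if_splits)
      hence "inv t \<in> S" using tG by (auto simp: a_def Phi_def S_def)
      hence "t \<in> m_inv G ` S" using tG by (metis image_eqI inv_inv)
      thus False using t by blast
    qed
    have injS: "inj_on (m_inv G) S" using inv_inj by (rule inj_on_subset) (auto simp: S_def)
    have "skew_mult G Xs h (Phi f) (Phi g) r x = (\<Sum>t\<in>A. E t (inv t \<otimes> r))"
      unfolding RHS using step1 by (intro sum.cong refl) auto
    also have "\<dots> = (\<Sum>t\<in>m_inv G ` S. E t (inv t \<otimes> r))"
      using Afin sub1 zero by (intro sum.mono_neutral_right) auto
    also have "\<dots> = (\<Sum>s\<in>S. E (inv s) (inv (inv s) \<otimes> r))"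
      using injS by (simp add: sum.reindex)
    also have "\<dots> = (\<Sum>s\<in>S. f (x, h s x) * g (h s x, h (inv r) x))"
    proof (intro sum.cong refl)
      fix s assume s: "s \<in> S"
      hence sG: "s \<in> carrier G" and xs: "x \<in> Xs (inv s)" by (auto simp: S_def)
      have y: "h s x \<in> Xs (s \<otimes> r)" using inter[OF sG rG xs xr] .
      have c: "h (inv (s \<otimes> r)) (h s x) = h (inv r) x"
        using comp2[OF sG rG xs xr] sG rG by (simp add: inv_mult_group)
      show "E (inv s) (inv (inv s) \<otimes> r) = f (x, h s x) * g (h s x, h (inv r) x)"
        using sG rG xs y c by (simp add: E_def a_def b_def Phi_def)
    qed
    finally show ?thesis using LHS by simp
  qed
qed


end

theorem mainTheorem10:
  fixes G :: "('g, 'm) monoid_scheme"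
    and X :: "'x set" and Xs :: "'g \<Rightarrow> 'x set" and h :: "'g \<Rightarrow> 'x \<Rightarrow> 'x"
  assumes "group G"
    and "free_partial_action G X Xs h"
  shows "\<exists>\<Phi> :: ('x \<times> 'x \<Rightarrow> 'k::field) \<Rightarrow> ('g \<Rightarrow> 'x \<Rightarrow> 'k).
     bij_betw \<Phi> (F0R G Xs h) (skew_carrier G Xs) \<and>
     (\<forall>f\<in>F0R G Xs h. \<forall>g\<in>F0R G Xs h. \<Phi> (\<lambda>p. f p + g p) = (\<lambda>t x. \<Phi> f t x + \<Phi> g t x)) \<and>
     (\<forall>c. \<forall>f\<in>F0R G Xs h. \<Phi> (\<lambda>p. c * f p) = (\<lambda>t x. c * \<Phi> f t x)) \<and>
     (\<forall>f\<in>F0R G Xs h. \<forall>g\<in>F0R G Xs h.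
        \<Phi> (R_mult G Xs h f g) = skew_mult G Xs h (\<Phi> f) (\<Phi> g))"
proof -
  interpret fpa G X Xs h using assms by (simp add: fpa_def fpa_axioms_def)
  show ?thesis
  proof (intro exI[of _ Phi] conjI ballI allI)
    show "bij_betw Phi (F0R G Xs h) (skew_carrier G Xs)" by (rule Phi_bij)
  next
    fix f g :: "'x \<times> 'x \<Rightarrow> 'k" 
    show "Phi (\<lambda>p. f p + g p) = (\<lambda>t x. Phi f t x + Phi g t x)" by (simp add: Phi_def fun_eq_iff)
  next
    fix c :: 'k and f :: "'x \<times> 'x \<Rightarrow> 'k"
    show "Phi (\<lambda>p. c * f p) = (\<lambda>t x. c * Phi f t x)" by (simp add: Phi_def fun_eq_iff)
  next
    fix f g :: "'x \<times> 'x \<Rightarrow> 'k" assume "f \<in> F0R G Xs h" "g \<in> F0R G Xs h"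
    thus "Phi (R_mult G Xs h f g) = skew_mult G Xs h (Phi f) (Phi g)" by (rule Phi_mult)
  qed
qed

end
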